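(* Let $n\in\mathbb{N}$, $A_n=\{(i,j)\in\mathbb{Z}^2:0\le i,j\le 14n\}$ and $\tau:\mathbb{R}^2\to\mathbb{R}^2$, $\tau(x,y)=(x,(28n)^y)$. Let $(a_1,b_1),(a_2,b_2),(a_3,b_3)\in A_n$ with $a_1<a_2<a_3$ and either $b_1<b_2<b_3$ or $b_3<b_2<b_1$. Then the point $\tau(a_2,b_2)$ lies strictly below the line segment between $\tau(a_1,b_1)$ and $\tau(a_3,b_3)$ (i.e., below the point of that segment with $x$-coordinate $a_2$). *)

theory Defs
  imports Complex_Main
begin

definition A :: "nat \<Rightarrow> (int \<times> int) set" where
  "A n = {(i, j). 0 \<le> i \<and> i \<le> 14 * int n \<and> 0 \<le> j \<and> j \<le> 14 * int n}"

definition tau :: "nat \<Rightarrow> real \<times> real \<Rightarrow> real \<times> real" where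
  "tau n p = (fst p, (28 * real n) powr (snd p))"

definition line_at :: "real \<times> real \<Rightarrow> real \<times> real \<Rightarrow> real \<Rightarrow> real" where
  "line_at P Q x = snd P + (x - fst P) / (fst Q - fst P) * (snd Q - snd P)"

end

theory Submission
  imports Defs
begin

lemma core:
  fixes x1 x2 x3 p q N :: real
  assumes "p \<ge> 1" "q \<ge> 1" "p + q \<le> N / 2" "x2 > 0" "x1 \<ge> 0" "x3 \<ge> 0"
    and "x3 \<ge> N * x2 \<or> x1 \<ge> N * x2"
  shows "x2 < x1 + p / (p + q) * (x3 - x1)"
proof -
  have pq: "p + q > 0" using assms by simp
  have "x1 + p / (p + q) * (x3 - x1) = (q * x1 + p * x3) / (p + q)"
    using pq by (simp add: field_simps)
  moreover have "(p + q) * x2 < q * x1 + p * x3"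
  proof -
    have "(p+q) * x2 \<le> N/2 * x2" using assms by (intro mult_right_mono) auto
    also have "\<dots> < N * x2" using assms by (simp add: mult_less_cancel_right)
    finally have A: "(p+q)*x2 < N * x2" .
    have "N * x2 \<le> q * x1 + p * x3"
      using assms(7)
    proof
      assume h: "x3 \<ge> N * x2"
      have "x3 \<le> p * x3" using assms by (simp add: mult_le_cancel_right1)
      moreover have "0 \<le> q * x1" using assms by simp
      ultimately show ?thesis using h by linarith
    next
      assume h: "x1 \<ge> N * x2"
      have "x1 \<le> q * x1" using assms by (simp add: mult_le_cancel_right1)
      moreover have "0 \<le> p * x3" using assms by simp
      ultimately show ?thesis using h by linarith
    qed
    with A show ?thesis by linarith
  qed
  ultimately show ?thesis using pq by (simp add: pos_less_divide_eq mult.commute)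
qed

theorem lemma7:
  fixes n :: nat and a1 b1 a2 b2 a3 b3 :: int
  assumes "(a1, b1) \<in> A n" and "(a2, b2) \<in> A n" and "(a3, b3) \<in> A n"
    and "a1 < a2" and "a2 < a3"
    and "(b1 < b2 \<and> b2 < b3) \<or> (b3 < b2 \<and> b2 < b1)"
  shows "snd (tau n (real_of_int a2, real_of_int b2))
           < line_at (tau n (real_of_int a1, real_of_int b1))
                     (tau n (real_of_int a3, real_of_int b3)) (real_of_int a2)"
proof -
  note r = assms(1-3)[unfolded A_def, simplified]
  have n: "n \<ge> 1" using r assms(6) by (cases n) auto
  define N where "N = 28 * real n"
  have N: "N \<ge> 28" using n by (simp add: N_def)
  have pw: "N powr real_of_int b = N ^ nat b" if "b \<ge> 0" for b
    using that N by (simp add: powr_real_of_int)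
  have step: "N ^ nat c \<ge> N * N ^ nat b" if "0 \<le> b" "b < c" for b c
  proof -
    have "N * N ^ nat b = N ^ Suc (nat b)" by simp
    also have "\<dots> \<le> N ^ nat c" using that N by (intro power_increasing) auto
    finally show ?thesis .
  qed
  have "N ^ nat b2 < N ^ nat b1 + (real_of_int a2 - real_of_int a1) /
        ((real_of_int a2 - real_of_int a1) + (real_of_int a3 - real_of_int a2)) *
        (N ^ nat b3 - N ^ nat b1)"
  proof (rule core)
    show "real_of_int a2 - real_of_int a1
        + (real_of_int a3 - real_of_int a2) \<le> N / 2" using r by (simp add: N_def)
    show "N ^ nat b3 \<ge> N * N ^ nat b2 \<or> N ^ nat b1 \<ge> N * N ^ nat b2"
      using assms(6) step r by auto
  qed (use assms(4,5) N in auto)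
  then show ?thesis
    using r by (simp add: tau_def line_at_def N_def[symmetric] pw)
qed

end
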